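(* Let $A,B\in\mathbb{R}^{N\times N}$ and $T>0$, and assume that $1$ is not an eigenvalue of $e^{T(A+B)}$ (i.e. $1$ is not a Floquet multiplier of $u'(t)=(A+B)u(t)$). Then there exists $\tau_0>0$ such that for every $\tau\in(0,\tau_0)$ the delayed system $u'(t)=Au(t)+Bu(t-\tau)$ has no nontrivial $T$-periodic solutions. *)

theory Defs
  imports "HOL-Analysis.Analysis"
begin

primrec mat_pow :: "real^'n^'n \<Rightarrow> nat \<Rightarrow> real^'n^'n" where
  "mat_pow M 0 = mat 1"
| "mat_pow M (Suc k) = M ** mat_pow M k"

definition mat_exp :: "real^'n^'n \<Rightarrow> real^'n^'n" where
  "mat_exp M = (\<Sum>k. (1 / fact k) *\<^sub>R mat_pow M k)"

definition is_eigenvalue :: "real^'n^'n \<Rightarrow> real \<Rightarrow> bool" where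
  "is_eigenvalue M c \<longleftrightarrow> (\<exists>v. v \<noteq> 0 \<and> M *v v = c *\<^sub>R v)"

definition delay_solution :: "real^'n^'n \<Rightarrow> real^'n^'n \<Rightarrow> real \<Rightarrow> (real \<Rightarrow> real^'n) \<Rightarrow> bool" where
  "delay_solution A B \<tau> u \<longleftrightarrow>
     (\<forall>t. (u has_vector_derivative (A *v u t + B *v u (t - \<tau>))) (at t))"

definition periodic_with :: "real \<Rightarrow> (real \<Rightarrow> 'a) \<Rightarrow> bool" where
  "periodic_with T u \<longleftrightarrow> (\<forall>t. u (t + T) = u t)"

end

theory Submission
  imports Defs
begin



typedef (overloaded) ('n::finite) sqm = "UNIV :: ((real^'n) \<Rightarrow>\<^sub>L (real^'n)) set"
  morphisms sq Sq by auto

lemma sq_Sq[simp]: "sq (Sq x) = x" by (simp add: Sq_inverse)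
lemma sqm_eq_iff: "a = b \<longleftrightarrow> sq a = sq b" by (simp add: sq_inject)

instantiation sqm :: (finite) real_normed_vector
begin
definition zero_sqm :: "'a sqm" where "zero_sqm = Sq 0"
definition plus_sqm :: "'a sqm \<Rightarrow> 'a sqm \<Rightarrow> 'a sqm" where "plus_sqm a b = Sq (sq a + sq b)"
definition minus_sqm :: "'a sqm \<Rightarrow> 'a sqm \<Rightarrow> 'a sqm" where "minus_sqm a b = Sq (sq a - sq b)"
definition uminus_sqm :: "'a sqm \<Rightarrow> 'a sqm" where "uminus_sqm a = Sq (- sq a)"
definition scaleR_sqm :: "real \<Rightarrow> 'a sqm \<Rightarrow> 'a sqm" where "scaleR_sqm r a = Sq (r *\<^sub>R sq a)"
definition norm_sqm :: "'a sqm \<Rightarrow> real" where "norm_sqm a = norm (sq a)"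
definition dist_sqm :: "'a sqm \<Rightarrow> 'a sqm \<Rightarrow> real" where "dist_sqm a b = norm (a - b)"
definition sgn_sqm :: "'a sqm \<Rightarrow> 'a sqm" where "sgn_sqm x = scaleR (inverse (norm x)) x"
definition uniformity_sqm :: "('a sqm \<times> 'a sqm) filter" where
  "uniformity_sqm = (INF e\<in>{0 <..}. principal {(x, y). dist x y < e})"
definition open_sqm :: "'a sqm set \<Rightarrow> bool"
  where "open_sqm S = (\<forall>x\<in>S. \<forall>\<^sub>F (x', y) in uniformity. x' = x \<longrightarrow> y \<in> S)"
instance
  apply standard
  unfolding dist_sqm_def open_sqm_def sgn_sqm_def uniformity_sqm_def
  apply (simp_all add: sqm_eq_iff zero_sqm_def plus_sqm_def minus_sqm_def uminus_sqm_def scaleR_sqm_def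
     norm_sqm_def algebra_simps norm_triangle_ineq)
  done
end

instantiation sqm :: (finite) real_normed_algebra_1
begin
definition times_sqm :: "'a sqm \<Rightarrow> 'a sqm \<Rightarrow> 'a sqm" where "times_sqm a b = Sq (sq a o\<^sub>L sq b)"
definition one_sqm :: "'a sqm" where "one_sqm = Sq id_blinfun"
instance
proof
  have ne: "(1::real^'a) \<noteq> 0" by (simp add: vec_eq_iff)
  show "(0::'a sqm) \<noteq> 1"
    apply (simp add: sqm_eq_iff zero_sqm_def one_sqm_def)
    by (metis ne blinfun_apply_id_blinfun blinfun.zero_left)
  show "norm (1::'a sqm) = 1" by (simp add: one_sqm_def norm_sqm_def)
qed (simp_all add: sqm_eq_iff zero_sqm_def plus_sqm_def minus_sqm_def uminus_sqm_def scaleR_sqm_def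
     norm_sqm_def times_sqm_def one_sqm_def norm_blinfun_compose
   blinfun_eqI blinfun.bilinear_simps)
end

instance sqm :: (finite) banach
proof
  fix X :: "nat \<Rightarrow> 'a sqm" assume "Cauchy X"
  hence "Cauchy (\<lambda>n. sq (X n))"
    by (simp add: Cauchy_def dist_sqm_def dist_norm norm_sqm_def minus_sqm_def)
  then obtain L where L: "(\<lambda>n. sq (X n)) \<longlonglongrightarrow> L" using Cauchy_convergent_iff convergent_def by blast
  have "X \<longlonglongrightarrow> Sq L"
    using L by (simp add: LIMSEQ_def dist_sqm_def dist_norm norm_sqm_def minus_sqm_def)
  thus "convergent X" by (auto simp: convergent_def)
qed

definition bl :: "real^'n^'n \<Rightarrow> ('n::finite) sqm" where "bl M = Sq (Blinfun (\<lambda>x. M *v x))"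

lemma sq_bl[simp]: "blinfun_apply (sq (bl M)) x = M *v x"
  by (simp add: bl_def bounded_linear_Blinfun_apply)

lemma sq_times[simp]: "blinfun_apply (sq (X * Y)) x = blinfun_apply (sq X) (blinfun_apply (sq Y) x)"
  by (simp add: times_sqm_def)
lemma sq_one[simp]: "blinfun_apply (sq 1) x = x"
  by (simp add: one_sqm_def)
lemma sq_scaleR[simp]: "blinfun_apply (sq (r *\<^sub>R X)) x = r *\<^sub>R blinfun_apply (sq X) x"
  by (simp add: scaleR_sqm_def blinfun.bilinear_simps)
lemma sq_minus[simp]: "blinfun_apply (sq (- X)) x = - blinfun_apply (sq X) x"
  by (simp add: uminus_sqm_def blinfun.bilinear_simps)
lemma sq_plus[simp]: "blinfun_apply (sq (X + Y)) x = blinfun_apply (sq X) x + blinfun_apply (sq Y) x"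
  by (simp add: plus_sqm_def blinfun.bilinear_simps)
lemma norm_sq_apply: "norm (blinfun_apply (sq X) x) \<le> norm X * norm x"
  by (simp add: norm_sqm_def norm_blinfun)

lemma bl_eqI: "(\<And>x. blinfun_apply (sq X) x = blinfun_apply (sq Y) x) \<Longrightarrow> X = Y"
  by (simp add: sqm_eq_iff blinfun_eqI)

lemma bl_mult: "bl (M ** N) = bl M * bl N"
  by (auto intro!: bl_eqI simp: matrix_vector_mul_assoc[symmetric])

lemma bl_one: "bl (mat 1) = 1"
  by (auto intro!: bl_eqI)

lemma bl_pow: "bl (mat_pow M k) = bl M ^ k"
  by (induction k) (simp_all add: bl_mult bl_one)

lemma bl_scale: "bl (r *\<^sub>R M) = r *\<^sub>R bl M"
  by (auto intro!: bl_eqI simp: scaleR_matrix_vector_assoc)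

lemma bl_add: "bl (M + N) = bl M + bl N"
  by (auto intro!: bl_eqI simp: matrix_vector_mult_add_rdistrib)

lemma bounded_linear_entry: "bounded_linear (\<lambda>X::'n::finite sqm. blinfun_apply (sq X) x $ i)"
proof (rule bounded_linear_intro[where K="norm x"])
  fix X Y :: "'n sqm" and r :: real
  show "blinfun_apply (sq (X + Y)) x $ i = blinfun_apply (sq X) x $ i + blinfun_apply (sq Y) x $ i" by simp
  show "blinfun_apply (sq (r *\<^sub>R X)) x $ i = r *\<^sub>R (blinfun_apply (sq X) x $ i)" by simp
  have "norm (blinfun_apply (sq X) x $ i) \<le> norm (blinfun_apply (sq X) x)" using component_le_norm_cart[of "blinfun_apply (sq X) x" i] by simp
  also have "\<dots> \<le> norm X * norm x" by (rule norm_sq_apply)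
  finally show "norm (blinfun_apply (sq X) x $ i) \<le> norm X * norm x" .
qed

lemma mat_entry: "(N *v axis j 1) $ i = N $ i $ j"
  by (simp add: matrix_vector_mult_def axis_def if_distrib cong: if_cong)

lemma mat_exp_bl: "mat_exp M = matrix (blinfun_apply (sq (exp (bl M))))"
proof -
  let ?X = "bl M"
  let ?L = "matrix (blinfun_apply (sq (exp ?X)))"
  have S: "(\<lambda>k. ?X ^ k /\<^sub>R fact k) sums exp ?X"
    unfolding exp_def by (rule summable_exp_generic[THEN summable_sums])
  have "(\<lambda>k. ((1 / fact k) *\<^sub>R mat_pow M k) $ i $ j) sums (?L $ i $ j)" for i j
  proof -
    have "(\<lambda>k. blinfun_apply (sq (?X ^ k /\<^sub>R fact k)) (axis j 1) $ i) sums
          (blinfun_apply (sq (exp ?X)) (axis j 1) $ i)"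
      by (rule bounded_linear.sums[OF bounded_linear_entry S])
    moreover have "blinfun_apply (sq (?X ^ k /\<^sub>R fact k)) (axis j 1) $ i = ((1 / fact k) *\<^sub>R mat_pow M k) $ i $ j" for k
      by (simp add: bl_pow[symmetric] mat_entry divide_inverse mult.commute)
    ultimately show ?thesis by (simp add: matrix_def)
  qed
  hence "(\<lambda>k. (1 / fact k) *\<^sub>R mat_pow M k) sums ?L"
    unfolding sums_def by (intro vec_tendstoI) (simp add: sums_def)
  thus ?thesis unfolding mat_exp_def by (rule sums_unique[symmetric])
qed

lemma mat_exp_apply: "mat_exp M *v x = blinfun_apply (sq (exp (bl M))) x"
  unfolding mat_exp_bl using fun_cong[OF matrix_vector_mul(3)[OF blinfun.bounded_linear_right]] by blast

lemma vec_mvt: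
  fixes f :: "real \<Rightarrow> 'b::real_normed_vector"
  assumes "a \<le> b"
    and d: "\<And>x. x \<in> {a..b} \<Longrightarrow> (f has_vector_derivative f' x) (at x)"
    and K: "\<And>x. x \<in> {a..b} \<Longrightarrow> norm (f' x) \<le> K"
  shows "norm (f b - f a) \<le> K * (b - a)"
proof -
  have "norm (f b - f a) \<le> K * norm (b - a)"
  proof (rule differentiable_bound[of "{a..b}" f "\<lambda>x h. h *\<^sub>R f' x" K b a])
    show "convex {a..b}" by simp
    show "(f has_derivative (\<lambda>h. h *\<^sub>R f' x)) (at x within {a..b})" if "x \<in> {a..b}" for x
      using d[OF that] unfolding has_vector_derivative_def by (rule has_derivative_at_withinI)
    show "onorm (\<lambda>h. h *\<^sub>R f' x) \<le> K" if "x \<in> {a..b}" for x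
    proof (rule onorm_le)
      fix h :: real
      have "norm (h *\<^sub>R f' x) = \<bar>h\<bar> * norm (f' x)" by simp
      also have "\<dots> \<le> \<bar>h\<bar> * K" using K[OF that] by (intro mult_left_mono) auto
      finally show "norm (h *\<^sub>R f' x) \<le> K * norm h" by (simp add: mult.commute)
    qed
  qed (use assms(1) in auto)
  thus ?thesis using assms(1) by simp
qed

lemma per_nat: "periodic_with T u \<Longrightarrow> u (t + real k * T) = u t"
proof (induction k)
  case (Suc k)
  have "u (t + real (Suc k) * T) = u ((t + real k * T) + T)" by (simp add: algebra_simps)
  also have "\<dots> = u (t + real k * T)" using Suc.prems by (simp add: periodic_with_def)
  finally show ?case using Suc by simp
qed simp

lemma per_int: assumes p: "periodic_with T u" shows "u (t + real_of_int n * T) = u t"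
proof (cases "n \<ge> 0")
  case True
  then obtain k where k: "n = int k" using zero_le_imp_eq_int by blast
  have "u (t + real k * T) = u t" by (rule per_nat[OF p])
  thus ?thesis using k by simp
next
  case False
  have "0 \<le> - n" using False by simp
  then obtain k where k0: "- n = int k" using nonneg_int_cases by blast
  hence k: "n = - int k" by simp
  have "u ((t - real k * T) + real k * T) = u (t - real k * T)" by (rule per_nat[OF p])
  moreover have "(t - real k * T) + real k * T = t" by simp
  ultimately have "u t = u (t - real k * T)" by metis
  thus ?thesis using k by simp
qed

lemma per_bounded:
  fixes u :: "real \<Rightarrow> 'b::real_normed_vector"
  assumes "T > 0" "periodic_with T u" "continuous_on UNIV u"
  shows "\<exists>M. \<forall>t. norm (u t) \<le> M"
proof -
  have "compact (u ` {0..T})"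
    by (rule compact_continuous_image) (use assms(3) continuous_on_subset in auto)
  then obtain M where M: "\<forall>x \<in> u ` {0..T}. norm x \<le> M"
    using compact_imp_bounded[of "u ` {0..T}"] unfolding bounded_iff by blast
  have "norm (u t) \<le> M" for t
  proof -
    define n where "n = \<lfloor>t / T\<rfloor>"
    have "real_of_int n \<le> t / T" "t / T < real_of_int n + 1" unfolding n_def by linarith+
    hence "real_of_int n * T \<le> t" "t < (real_of_int n + 1) * T"
      using assms(1) by (simp_all add: pos_le_divide_eq pos_divide_less_eq)
    hence "t - real_of_int n * T \<in> {0..T}" by (auto simp: algebra_simps)
    moreover have "u t = u ((t - real_of_int n * T) + real_of_int n * T)" by simp
    hence "u t = u (t - real_of_int n * T)" using per_int[OF assms(2)] by metis
    ultimately have "u t \<in> u ` {0..T}" by (metis image_eqI)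
    thus ?thesis using M by blast
  qed
  thus ?thesis by blast
qed

lemma bb: "bounded_bilinear (\<lambda>(X::'n::finite sqm) v. blinfun_apply (sq X) v)"
proof
  fix a a' :: "'n sqm" and b b' :: "real^'n" and r :: real
  show "blinfun_apply (sq (a + a')) b = blinfun_apply (sq a) b + blinfun_apply (sq a') b" by simp
  show "blinfun_apply (sq a) (b + b') = blinfun_apply (sq a) b + blinfun_apply (sq a) b'"
    by (simp add: blinfun.add_right)
  show "blinfun_apply (sq (r *\<^sub>R a)) b = r *\<^sub>R blinfun_apply (sq a) b" by simp
  show "blinfun_apply (sq a) (r *\<^sub>R b) = r *\<^sub>R blinfun_apply (sq a) b"
    by (simp add: blinfun.scaleR_right)
  show "\<exists>K. \<forall>a b. norm (blinfun_apply (sq (a::'n sqm)) b) \<le> norm a * norm b * K"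
    by (rule exI[of _ 1]) (simp add: norm_sq_apply)
qed

lemma core:
  fixes A B :: "real^'n::finite^'n" and T :: real
  assumes T: "T > 0" and ne: "\<not> is_eigenvalue (mat_exp (T *\<^sub>R (A + B))) 1"
  obtains c where "c > 0" "\<And>\<tau> u M. \<tau> > 0 \<Longrightarrow> delay_solution A B \<tau> u \<Longrightarrow> periodic_with T u \<Longrightarrow>
     (\<And>t. norm (u t) \<le> M) \<Longrightarrow> norm (u 0) \<le> c * \<tau> * M"
proof -
  define Cb where "Cb = bl (A + B)"
  define F where "F s = exp (s *\<^sub>R (- Cb))" for s
  define f where "f v = blinfun_apply (sq (F T)) v - v" for v
  have blf: "bounded_linear f" unfolding f_def
    by (intro bounded_linear_sub blinfun.bounded_linear_right bounded_linear_ident)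
  have fix0: "v = 0" if "blinfun_apply (sq (F T)) v = v" for v
  proof -
    have "exp (T *\<^sub>R Cb) * F T = 1" unfolding F_def using exp_minus_inverse[of "T *\<^sub>R Cb"] by simp
    hence "v = blinfun_apply (sq (exp (T *\<^sub>R Cb) * F T)) v" by simp
    also have "\<dots> = blinfun_apply (sq (exp (T *\<^sub>R Cb))) v" using that by simp
    also have "\<dots> = mat_exp (T *\<^sub>R (A + B)) *v v" by (simp add: mat_exp_apply bl_scale Cb_def)
    finally have "mat_exp (T *\<^sub>R (A + B)) *v v = 1 *\<^sub>R v" by simp
    thus ?thesis using ne unfolding is_eigenvalue_def by blast
  qed
  have "inj f"
  proof (rule injI)
    fix x y assume "f x = f y"
    hence h: "blinfun_apply (sq (F T)) (x - y) = x - y"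
      by (simp add: f_def blinfun.diff_right algebra_simps)
    show "x = y" using fix0[OF h] by simp
  qed
  then obtain K0 where K0: "K0 > 0" "\<And>x. K0 * norm x \<le> norm (f x)"
    using linear_inj_bounded_below_pos[of f] blf bounded_linear.linear by blast
  define nA where "nA = norm (bl A)"
  define nB where "nB = norm (bl B)"
  define nC where "nC = norm Cb"
  have nn: "nA \<ge> 0" "nB \<ge> 0" "nC \<ge> 0" unfolding nA_def nB_def nC_def by simp_all
  have nAv: "norm (A *v x) \<le> nA * norm x" for x
    using norm_sq_apply[of "bl A" x] unfolding nA_def by simp
  have nBv: "norm (B *v x) \<le> nB * norm x" for x
    using norm_sq_apply[of "bl B" x] unfolding nB_def by simp
  define c where "c = (1 / K0) * exp (T * nC) * nB * (nA + nB) * T + 1"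
  have "0 \<le> (1 / K0) * exp (T * nC) * nB * (nA + nB) * T"
    using nn K0 T by (intro mult_nonneg_nonneg) auto
  hence c0: "c > 0" unfolding c_def by linarith
  show ?thesis
  proof (rule that[OF c0])
    fix \<tau> u M
    assume tau: "\<tau> > 0" and sol: "delay_solution A B \<tau> u" and per: "periodic_with T u"
      and bnd: "\<And>t. norm (u t) \<le> M"
    have M0: "M \<ge> 0" using bnd[of 0] norm_ge_zero order_trans by blast
    define D where "D t = A *v u t + B *v u (t - \<tau>)" for t
    have du: "(u has_vector_derivative D t) (at t)" for t
      using sol unfolding delay_solution_def D_def by blast
    have nD: "norm (D t) \<le> (nA + nB) * M" for t
    proof -
      have "norm (D t) \<le> norm (A *v u t) + norm (B *v u (t - \<tau>))"
        unfolding D_def by (rule norm_triangle_ineq)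
      also have "\<dots> \<le> nA * M + nB * M"
        using nAv[of "u t"] nBv[of "u (t - \<tau>)"] bnd[of t] bnd[of "t - \<tau>"] nn
        by (meson add_mono mult_left_mono order_trans)
      finally show ?thesis by (simp add: algebra_simps)
    qed
    have diff: "norm (u (s - \<tau>) - u s) \<le> (nA + nB) * M * \<tau>" for s
    proof -
      have "norm (u s - u (s - \<tau>)) \<le> (nA + nB) * M * (s - (s - \<tau>))"
        by (rule vec_mvt[where f' = D]) (use tau du nD in auto)
      thus ?thesis by (simp add: norm_minus_commute)
    qed
    define g where "g s = B *v (u (s - \<tau>) - u s)" for s
    have ng: "norm (g s) \<le> nB * ((nA + nB) * M * \<tau>)" for s
      unfolding g_def using nBv diff nn by (meson mult_left_mono order_trans)
    have dF: "(F has_vector_derivative F s * (- Cb)) (at s)" for s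
      unfolding F_def[abs_def] by (rule exp_scaleR_has_vector_derivative_right)
    define w where "w s = blinfun_apply (sq (F s)) (u s)" for s
    have dw: "(w has_vector_derivative blinfun_apply (sq (F s)) (g s)) (at s)" for s
    proof -
      have "((\<lambda>x. blinfun_apply (sq (F x)) (u x)) has_derivative
        (\<lambda>h. blinfun_apply (sq (F s)) (h *\<^sub>R D s) + blinfun_apply (sq (h *\<^sub>R (F s * - Cb))) (u s))) (at s)"
        using bounded_bilinear.FDERIV[OF bb, of F "\<lambda>h. h *\<^sub>R (F s * - Cb)" s UNIV u "\<lambda>h. h *\<^sub>R D s"]
          dF[of s] du[of s] unfolding has_vector_derivative_def by simp
      moreover have "(\<lambda>h. blinfun_apply (sq (F s)) (h *\<^sub>R D s) + blinfun_apply (sq (h *\<^sub>R (F s * - Cb))) (u s))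
          = (\<lambda>h. h *\<^sub>R blinfun_apply (sq (F s)) (g s))"
      proof
        fix h
        have e: "D s - (A + B) *v u s = g s" unfolding D_def g_def by (simp add: algebra_simps)
        show "blinfun_apply (sq (F s)) (h *\<^sub>R D s) + blinfun_apply (sq (h *\<^sub>R (F s * - Cb))) (u s)
            = h *\<^sub>R blinfun_apply (sq (F s)) (g s)"
          by (simp add: Cb_def blinfun.scaleR_right blinfun.minus_right e[symmetric] blinfun.diff_right algebra_simps)
      qed
      ultimately show ?thesis unfolding has_vector_derivative_def w_def[abs_def] by simp
    qed
    have nFg: "norm (blinfun_apply (sq (F s)) (g s)) \<le> exp (T * nC) * (nB * ((nA + nB) * M * \<tau>))"
      if "s \<in> {0..T}" for s
    proof -
      have "norm (F s) \<le> exp (norm (s *\<^sub>R (- Cb)))" unfolding F_def by (rule norm_exp)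
      also have "\<dots> = exp (\<bar>s\<bar> * nC)" by (simp add: nC_def)
      also have "\<dots> \<le> exp (T * nC)" using that nn by (auto intro!: mult_right_mono)
      finally have nF: "norm (F s) \<le> exp (T * nC)" .
      have "norm (blinfun_apply (sq (F s)) (g s)) \<le> norm (F s) * norm (g s)" by (rule norm_sq_apply)
      also have "\<dots> \<le> exp (T * nC) * (nB * ((nA + nB) * M * \<tau>))"
        by (rule mult_mono[OF nF ng]) auto
      finally show ?thesis .
    qed
    have "norm (w T - w 0) \<le> exp (T * nC) * (nB * ((nA + nB) * M * \<tau>)) * (T - 0)"
      by (rule vec_mvt[OF _ dw nFg]) (use T in auto)
    moreover have "w 0 = u 0" unfolding w_def F_def by simp
    moreover have "w T = blinfun_apply (sq (F T)) (u 0)"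
      unfolding w_def using per unfolding periodic_with_def by (metis add_0)
    ultimately have "norm (f (u 0)) \<le> exp (T * nC) * (nB * ((nA + nB) * M * \<tau>)) * T"
      unfolding f_def by simp
    hence "K0 * norm (u 0) \<le> exp (T * nC) * (nB * ((nA + nB) * M * \<tau>)) * T"
      using K0(2) order_trans by blast
    hence "norm (u 0) \<le> exp (T * nC) * (nB * ((nA + nB) * M * \<tau>)) * T / K0"
      using K0(1) by (simp add: pos_le_divide_eq mult.commute)
    also have "\<dots> = ((1 / K0) * exp (T * nC) * nB * (nA + nB) * T) * \<tau> * M" by simp
    also have "\<dots> \<le> c * \<tau> * M" unfolding c_def using tau M0
      by (intro mult_right_mono) auto
    finally show "norm (u 0) \<le> c * \<tau> * M" .
  qed
qed

theorem lemma3: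
  fixes A B :: "real^'n^'n" and T :: real
  assumes "T > 0"
    and "\<not> is_eigenvalue (mat_exp (T *\<^sub>R (A + B))) 1"
  shows "\<exists>\<tau>0 > 0. \<forall>\<tau>. 0 < \<tau> \<and> \<tau> < \<tau>0 \<longrightarrow>
           (\<forall>u. delay_solution A B \<tau> u \<and> periodic_with T u \<longrightarrow> u = (\<lambda>t. 0))"
proof -
  obtain c where c0: "c > 0" and cb: "\<And>\<tau> u M. \<tau> > 0 \<Longrightarrow> delay_solution A B \<tau> u \<Longrightarrow> periodic_with T u \<Longrightarrow>
     (\<And>t. norm (u t) \<le> M) \<Longrightarrow> norm (u 0) \<le> c * \<tau> * M"
    using core[OF assms] by blast
  show ?thesis
  proof (rule exI[of _ "1 / (2 * c)"], intro conjI allI impI)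
    show "1 / (2 * c) > 0" using c0 by simp
    fix \<tau> and u :: "real \<Rightarrow> real^'n"
    assume "0 < \<tau> \<and> \<tau> < 1 / (2 * c)" and "delay_solution A B \<tau> u \<and> periodic_with T u"
    hence tau: "\<tau> > 0" and tau2: "\<tau> < 1 / (2 * c)" and sol: "delay_solution A B \<tau> u"
      and per: "periodic_with T u" by auto
    have ctau: "c * \<tau> \<le> 1 / 2" using tau2 c0 by (simp add: less_divide_eq mult.commute)
    have cont: "continuous_on UNIV u"
      using sol unfolding delay_solution_def
      by (intro continuous_at_imp_continuous_on ballI) (metis has_vector_derivative_continuous)
    obtain M where bnd: "\<And>t. norm (u t) \<le> M" using per_bounded[OF assms(1) per cont] by blast
    define S where "S = (SUP t. norm (u t))"
    have bdd: "bdd_above (range (\<lambda>t. norm (u t)))" using bnd by (intro bdd_aboveI) auto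
    have le: "norm (u t) \<le> S" for t unfolding S_def by (rule cSUP_upper[OF UNIV_I bdd])
    have sh: "norm (u s) \<le> c * \<tau> * S" for s
    proof -
      define v where "v t = u (t + s)" for t
      have "delay_solution A B \<tau> v" unfolding delay_solution_def
      proof
        fix t
        have d1: "((\<lambda>t. t + s) has_vector_derivative 1) (at t)"
          using has_vector_derivative_add_const[of "\<lambda>t. t" s 1] by simp
        have d2: "(u has_vector_derivative (A *v u (t + s) + B *v u (t + s - \<tau>))) (at (t + s))"
          using sol unfolding delay_solution_def by blast
        have "((u \<circ> (\<lambda>t. t + s)) has_vector_derivative (1 *\<^sub>R (A *v u (t + s) + B *v u (t + s - \<tau>)))) (at t)"
          by (rule vector_diff_chain_at[OF d1]) (use d2 in simp)
        moreover have "t + s - \<tau> = t - \<tau> + s" by simp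
        ultimately show "(v has_vector_derivative A *v v t + B *v v (t - \<tau>)) (at t)"
          unfolding v_def o_def by simp
      qed
      moreover have "periodic_with T v"
        using per unfolding periodic_with_def v_def by (metis add.commute add.left_commute)
      ultimately have "norm (v 0) \<le> c * \<tau> * S" using cb[OF tau] le unfolding v_def by blast
      thus ?thesis unfolding v_def by simp
    qed
    have "S \<le> c * \<tau> * S" unfolding S_def by (rule cSUP_least) (use sh S_def in auto)
    moreover have S0: "S \<ge> 0" using le[of 0] norm_ge_zero order_trans by blast
    moreover have "c * \<tau> * S \<le> 1 / 2 * S" using ctau S0 by (rule mult_right_mono)
    ultimately have "S \<le> 0" by linarith
    show "u = (\<lambda>t. 0)"
    proof
      fix t show "u t = 0" using le[of t] \<open>S \<le> 0\<close> by (metis norm_le_zero_iff order_trans)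
    qed
  qed
qed

end
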